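(* If a sequent without stoups (i.e. all of whose stoups are empty) is derivable in $\mathcal{M}_{2018}$, then it is also derivable in $\mathcal{F}_{2018}$.
   Context: Formulae are built from a countable set of variables and $\mathbf1$ by $\backslash,/,\cdot,\wedge,\vee$ and the unary $\langle\rangle$, $[]^{-1}$, $!$. A stoup is a finite multiset of formulae ($\varnothing$ empty); a tree term is a formula or $[\Xi]$; a meta-formula is $\zeta;\Gamma$ ($\zeta$ a stoup, $\Gamma$ a finite sequence of tree terms, empty $\Lambda$), $\varnothing;\Gamma$ written $\Gamma$; comma is concatenation / multiset union; sequents $\Xi\to C$; $\Xi(\Theta)$ designates an occurrence of a meta-formula $\Theta$ which is $\Xi$ itself or the content of a bracket $[\Theta]$ at any depth. Rules of $\mathcal{M}_{2018}$ (Morrill's calculus; no cut rule): axioms $A\to A$, $\Lambda\to\mathbf1$; ($/L$) from $\zeta_1;\Gamma\to B$ and $\Xi(\zeta_2;\Delta_1,C,\Delta_2)\to D$ infer $\Xi(\zeta_1,\zeta_2;\Delta_1,C/B,\Gamma,\Delta_2)\to D$; ($/R$) from $\zeta;\Gamma,B\to C$ infer $\zeta;\Gamma\to C/B$; ($\backslash L$) from $\zeta_1;\Gamma\to A$ and $\Xi(\zeta_2;\Delta_1,C,\Delta_2)\to D$ infer $\Xi(\zeta_1,\zeta_2;\Delta_1,\Gamma,A\backslash C,\Delta_2)\to D$; ($\backslash R$) from $\zeta;A,\Gamma\to C$ infer $\zeta;\Gamma\to A\backslash C$; ($\cdot L$) from $\Xi(\zeta;\Delta_1,A,B,\Delta_2)\to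 D$ infer $\Xi(\zeta;\Delta_1,A\cdot B,\Delta_2)\to D$; ($\cdot R$) from $\zeta_1;\Delta\to A$, $\zeta_2;\Gamma\to B$ infer $\zeta_1,\zeta_2;\Delta,\Gamma\to A\cdot B$; ($\mathbf1L$) from $\Xi(\zeta;\Delta_1,\Delta_2)\to A$ infer $\Xi(\zeta;\Delta_1,\mathbf1,\Delta_2)\to A$; ($\vee L$) from $\Xi(\zeta;\Delta_1,A_1,\Delta_2)\to C$ and $\Xi(\zeta;\Delta_1,A_2,\Delta_2)\to C$ infer $\Xi(\zeta;\Delta_1,A_1\vee A_2,\Delta_2)\to C$; ($\vee R_i$) from $\Xi\to A_i$ infer $\Xi\to A_1\vee A_2$; ($\wedge L_i$) from $\Xi(\zeta;\Delta_1,A_i,\Delta_2)\to C$ infer $\Xi(\zeta;\Delta_1,A_1\wedge A_2,\Delta_2)\to C$; ($\wedge R$) from $\Xi\to A_1$ and $\Xi\to A_2$ infer $\Xi\to A_1\wedge A_2$; ($[]^{-1}L$) from $\Xi(\zeta;\Delta_1,A,\Delta_2)\to B$ infer $\Xi(\zeta;\Delta_1,[[]^{-1}A],\Delta_2)\to B$; ($[]^{-1}R$) from $[\Xi]\to A$ infer $\Xi\to[]^{-1}A$; ($\langle\rangle L$) from $\Xi(\zeta;\Delta_1,[A],\Delta_2)\to B$ infer $\Xi(\zeta;\Delta_1,\langle\rangle A,\Delta_2)\to B$; ($\langle\rangle R$) from $\Xi\to A$ infer $[\Xi]\to\langle\rangle A$; ($!L$) from $\Xi(\zeta,A;\Gamma_1,\Gamma_2)\to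 B$ infer $\Xi(\zeta;\Gamma_1,!A,\Gamma_2)\to B$; ($!P$) from $\Xi(\zeta;\Gamma_1,A,\Gamma_2)\to B$ infer $\Xi(\zeta,A;\Gamma_1,\Gamma_2)\to B$; ($!R$) from $!A\to B$ infer $!A\to!B$; ($!C$) from $\Xi(\zeta,A;\Gamma_1,[A;\Gamma_2],\Gamma_3)\to B$ infer $\Xi(\zeta,A;\Gamma_1,[[\Gamma_2]],\Gamma_3)\to B$. Stoup-free calculus $\mathcal{F}_{2018}$: meta-formulae are finite sequences of tree terms; rules are the stoup-free versions of the rules above other than $!L,!P,!R,!C$ (drop all stoups), together with ($!L$) from $\Xi(\Delta_1,A,\Delta_2)\to C$ infer $\Xi(\Delta_1,!A,\Delta_2)\to C$; ($!P_1$) from $\Xi(\Delta_1,!A,\Phi,\Delta_2)\to C$ infer $\Xi(\Delta_1,\Phi,!A,\Delta_2)\to C$; ($!P_2$) the converse; ($!R$) from $!A\to B$ infer $!A\to!B$; ($!C$) from $\Xi(!A,\Gamma_1,[!A,\Gamma_2],\Gamma_3)\to C$ infer $\Xi(!A,\Gamma_1,[[\Gamma_2]],\Gamma_3)\to C$; and the cut rule: from $\Pi\to A$ and $\Xi(\Gamma_1,A,\Gamma_2)\to C$ infer $\Xi(\Gamma_1,\Pi,\Gamma_2)\to C$. *)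

theory Defs
  imports Main "HOL-Library.Multiset"
begin

datatype form =
    Var nat
  | One
  | Under form form      (* Under A C  =  A \ C *)
  | Over form form       (* Over C B   =  C / B *)
  | Prod form form
  | With form form
  | Plus form form
  | Diam form
  | BoxInv form
  | Bang form

(* tree terms: a formula or a bracketed meta-formula;
   meta-formulae: a stoup (multiset) and a sequence of tree terms *)
datatype tt = F form | Br mf
     and mf = MF "form multiset" "tt list"

(* contexts Xi(_): the hole is the whole meta-formula, or the content of a
   bracket at any depth; each enclosing level has its own stoup *)
datatype ctx = Hole | CBr "form multiset" "tt list" ctx "tt list"

fun fill :: "ctx \<Rightarrow> mf \<Rightarrow> mf" where
  "fill Hole T = T"
| "fill (CBr z G1 c G2) T = MF z (G1 @ [Br (fill c T)] @ G2)"

inductive derivM :: "mf \<Rightarrow> form \<Rightarrow> bool" where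
  M_ax: "derivM (MF {#} [F A]) A"
| M_one: "derivM (MF {#} []) One"
| M_OverL: "derivM (MF z1 G) B \<Longrightarrow> derivM (fill X (MF z2 (D1 @ [F C] @ D2))) D \<Longrightarrow>
    derivM (fill X (MF (z1 + z2) (D1 @ [F (Over C B)] @ G @ D2))) D"
| M_OverR: "derivM (MF z (G @ [F B])) C \<Longrightarrow> derivM (MF z G) (Over C B)"
| M_UnderL: "derivM (MF z1 G) A \<Longrightarrow> derivM (fill X (MF z2 (D1 @ [F C] @ D2))) D \<Longrightarrow>
    derivM (fill X (MF (z1 + z2) (D1 @ G @ [F (Under A C)] @ D2))) D"
| M_UnderR: "derivM (MF z ([F A] @ G)) C \<Longrightarrow> derivM (MF z G) (Under A C)"
| M_ProdL: "derivM (fill X (MF z (D1 @ [F A, F B] @ D2))) D \<Longrightarrow>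
    derivM (fill X (MF z (D1 @ [F (Prod A B)] @ D2))) D"
| M_ProdR: "derivM (MF z1 D) A \<Longrightarrow> derivM (MF z2 G) B \<Longrightarrow>
    derivM (MF (z1 + z2) (D @ G)) (Prod A B)"
| M_OneL: "derivM (fill X (MF z (D1 @ D2))) A \<Longrightarrow>
    derivM (fill X (MF z (D1 @ [F One] @ D2))) A"
| M_PlusL: "derivM (fill X (MF z (D1 @ [F A1] @ D2))) C \<Longrightarrow>
    derivM (fill X (MF z (D1 @ [F A2] @ D2))) C \<Longrightarrow>
    derivM (fill X (MF z (D1 @ [F (Plus A1 A2)] @ D2))) C"
| M_PlusR1: "derivM Xi A1 \<Longrightarrow> derivM Xi (Plus A1 A2)"
| M_PlusR2: "derivM Xi A2 \<Longrightarrow> derivM Xi (Plus A1 A2)"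
| M_WithL1: "derivM (fill X (MF z (D1 @ [F A1] @ D2))) C \<Longrightarrow>
    derivM (fill X (MF z (D1 @ [F (With A1 A2)] @ D2))) C"
| M_WithL2: "derivM (fill X (MF z (D1 @ [F A2] @ D2))) C \<Longrightarrow>
    derivM (fill X (MF z (D1 @ [F (With A1 A2)] @ D2))) C"
| M_WithR: "derivM Xi A1 \<Longrightarrow> derivM Xi A2 \<Longrightarrow> derivM Xi (With A1 A2)"
| M_BoxInvL: "derivM (fill X (MF z (D1 @ [F A] @ D2))) B \<Longrightarrow>
    derivM (fill X (MF z (D1 @ [Br (MF {#} [F (BoxInv A)])] @ D2))) B"
| M_BoxInvR: "derivM (MF {#} [Br Xi]) A \<Longrightarrow> derivM Xi (BoxInv A)"
| M_DiamL: "derivM (fill X (MF z (D1 @ [Br (MF {#} [F A])] @ D2))) B \<Longrightarrow>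
    derivM (fill X (MF z (D1 @ [F (Diam A)] @ D2))) B"
| M_DiamR: "derivM Xi A \<Longrightarrow> derivM (MF {#} [Br Xi]) (Diam A)"
| M_BangL: "derivM (fill X (MF (z + {#A#}) (G1 @ G2))) B \<Longrightarrow>
    derivM (fill X (MF z (G1 @ [F (Bang A)] @ G2))) B"
| M_BangP: "derivM (fill X (MF z (G1 @ [F A] @ G2))) B \<Longrightarrow>
    derivM (fill X (MF (z + {#A#}) (G1 @ G2))) B"
| M_BangR: "derivM (MF {#} [F (Bang A)]) B \<Longrightarrow> derivM (MF {#} [F (Bang A)]) (Bang B)"
| M_BangC: "derivM (fill X (MF (z + {#A#}) (G1 @ [Br (MF {#A#} G2)] @ G3))) B \<Longrightarrow>
    derivM (fill X (MF (z + {#A#}) (G1 @ [Br (MF {#} [Br (MF {#} G2)])] @ G3))) B"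

fun stoupfree_tt :: "tt \<Rightarrow> bool" and stoupfree :: "mf \<Rightarrow> bool" where
  "stoupfree_tt (F A) = True"
| "stoupfree_tt (Br m) = stoupfree m"
| "stoupfree (MF z G) = (z = {#} \<and> (\<forall>t\<in>set G. stoupfree_tt t))"

datatype ftt = FF form | FBr "ftt list"

datatype fctx = FHole | FCBr "ftt list" fctx "ftt list"

fun ffill :: "fctx \<Rightarrow> ftt list \<Rightarrow> ftt list" where
  "ffill FHole T = T"
| "ffill (FCBr G1 c G2) T = G1 @ [FBr (ffill c T)] @ G2"

inductive derivF :: "ftt list \<Rightarrow> form \<Rightarrow> bool" where
  F_ax: "derivF [FF A] A"
| F_one: "derivF [] One"
| F_OverL: "derivF G B \<Longrightarrow> derivF (ffill X (D1 @ [FF C] @ D2)) D \<Longrightarrow>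
    derivF (ffill X (D1 @ [FF (Over C B)] @ G @ D2)) D"
| F_OverR: "derivF (G @ [FF B]) C \<Longrightarrow> derivF G (Over C B)"
| F_UnderL: "derivF G A \<Longrightarrow> derivF (ffill X (D1 @ [FF C] @ D2)) D \<Longrightarrow>
    derivF (ffill X (D1 @ G @ [FF (Under A C)] @ D2)) D"
| F_UnderR: "derivF ([FF A] @ G) C \<Longrightarrow> derivF G (Under A C)"
| F_ProdL: "derivF (ffill X (D1 @ [FF A, FF B] @ D2)) D \<Longrightarrow>
    derivF (ffill X (D1 @ [FF (Prod A B)] @ D2)) D"
| F_ProdR: "derivF D A \<Longrightarrow> derivF G B \<Longrightarrow> derivF (D @ G) (Prod A B)"
| F_OneL: "derivF (ffill X (D1 @ D2)) A \<Longrightarrow> derivF (ffill X (D1 @ [FF One] @ D2)) A"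
| F_PlusL: "derivF (ffill X (D1 @ [FF A1] @ D2)) C \<Longrightarrow>
    derivF (ffill X (D1 @ [FF A2] @ D2)) C \<Longrightarrow>
    derivF (ffill X (D1 @ [FF (Plus A1 A2)] @ D2)) C"
| F_PlusR1: "derivF Xi A1 \<Longrightarrow> derivF Xi (Plus A1 A2)"
| F_PlusR2: "derivF Xi A2 \<Longrightarrow> derivF Xi (Plus A1 A2)"
| F_WithL1: "derivF (ffill X (D1 @ [FF A1] @ D2)) C \<Longrightarrow>
    derivF (ffill X (D1 @ [FF (With A1 A2)] @ D2)) C"
| F_WithL2: "derivF (ffill X (D1 @ [FF A2] @ D2)) C \<Longrightarrow>
    derivF (ffill X (D1 @ [FF (With A1 A2)] @ D2)) C"
| F_WithR: "derivF Xi A1 \<Longrightarrow> derivF Xi A2 \<Longrightarrow> derivF Xi (With A1 A2)"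
| F_BoxInvL: "derivF (ffill X (D1 @ [FF A] @ D2)) B \<Longrightarrow>
    derivF (ffill X (D1 @ [FBr [FF (BoxInv A)]] @ D2)) B"
| F_BoxInvR: "derivF [FBr Xi] A \<Longrightarrow> derivF Xi (BoxInv A)"
| F_DiamL: "derivF (ffill X (D1 @ [FBr [FF A]] @ D2)) B \<Longrightarrow>
    derivF (ffill X (D1 @ [FF (Diam A)] @ D2)) B"
| F_DiamR: "derivF Xi A \<Longrightarrow> derivF [FBr Xi] (Diam A)"
| F_BangL: "derivF (ffill X (D1 @ [FF A] @ D2)) C \<Longrightarrow>
    derivF (ffill X (D1 @ [FF (Bang A)] @ D2)) C"
| F_BangP1: "derivF (ffill X (D1 @ [FF (Bang A)] @ Phi @ D2)) C \<Longrightarrow>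
    derivF (ffill X (D1 @ Phi @ [FF (Bang A)] @ D2)) C"
| F_BangP2: "derivF (ffill X (D1 @ Phi @ [FF (Bang A)] @ D2)) C \<Longrightarrow>
    derivF (ffill X (D1 @ [FF (Bang A)] @ Phi @ D2)) C"
| F_BangR: "derivF [FF (Bang A)] B \<Longrightarrow> derivF [FF (Bang A)] (Bang B)"
| F_BangC: "derivF (ffill X ([FF (Bang A)] @ G1 @ [FBr ([FF (Bang A)] @ G2)] @ G3)) C \<Longrightarrow>
    derivF (ffill X ([FF (Bang A)] @ G1 @ [FBr [FBr G2]] @ G3)) C"
| F_cut: "derivF Pi A \<Longrightarrow> derivF (ffill X (G1 @ [FF A] @ G2)) C \<Longrightarrow>
    derivF (ffill X (G1 @ Pi @ G2)) C"

fun tr_tt :: "tt \<Rightarrow> ftt" and tr :: "mf \<Rightarrow> ftt list" where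
  "tr_tt (F A) = FF A"
| "tr_tt (Br m) = FBr (tr m)"
| "tr (MF z G) = map tr_tt G"

end

theory Submission
  imports Defs
begin

definition bangs :: "form list \<Rightarrow> ftt list" where
  "bangs L = map (\<lambda>a. FF (Bang a)) L"

lemma bangs_simps[simp]: "bangs [] = []" "bangs (a#L) = FF (Bang a) # bangs L"
  "bangs (L1 @ L2) = bangs L1 @ bangs L2"
  by (auto simp: bangs_def)

fun rel_tt :: "tt \<Rightarrow> ftt \<Rightarrow> bool" and rel :: "mf \<Rightarrow> ftt list \<Rightarrow> bool" where
  "rel_tt (F A) y = (y = FF A)"
| "rel_tt (Br m) y = (\<exists>Y. y = FBr Y \<and> rel m Y)"
| "rel (MF z G) Y = (\<exists>L Gs. Y = bangs L @ Gs \<and> mset L = z \<and> list_all2 rel_tt G Gs)"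

fun relctx :: "ctx \<Rightarrow> fctx \<Rightarrow> bool" where
  "relctx Hole X' = (X' = FHole)"
| "relctx (CBr z G1 c G2) X' = (\<exists>L G1' c' G2'. X' = FCBr (bangs L @ G1') c' G2' \<and> mset L = z
     \<and> list_all2 rel_tt G1 G1' \<and> relctx c c' \<and> list_all2 rel_tt G2 G2')"

lemma rel_fill_dest:
  "rel (fill X T) Y \<Longrightarrow> \<exists>X' T'. Y = ffill X' T' \<and> relctx X X' \<and> rel T T'"
proof (induction X arbitrary: Y)
  case Hole
  then show ?case by (intro exI[of _ FHole]) auto
next
  case (CBr z G1 c G2)
  from CBr.prems obtain L Gs where Y: "Y = bangs L @ Gs" "mset L = z"
    and ra: "list_all2 rel_tt (G1 @ [Br (fill c T)] @ G2) Gs" by auto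
  from ra obtain G1' y G2' where Gs: "Gs = G1' @ [y] @ G2'" and r1: "list_all2 rel_tt G1 G1'"
    and ry: "rel_tt (Br (fill c T)) y" and r2: "list_all2 rel_tt G2 G2'"
    by (auto simp: list_all2_append1 list_all2_Cons1)
  from ry obtain Y0 where y: "y = FBr Y0" and "rel (fill c T) Y0" by auto
  with CBr.IH obtain c' T' where "Y0 = ffill c' T'" "relctx c c'" "rel T T'" by blast
  then show ?case using Y Gs y r1 r2
    by (intro exI[of _ "FCBr (bangs L @ G1') c' G2'"] exI[of _ T']) auto
qed

lemma rel_fill_intro:
  "relctx X X' \<Longrightarrow> rel T T' \<Longrightarrow> rel (fill X T) (ffill X' T')"
proof (induction X arbitrary: X')
  case Hole
  then show ?case by auto
next
  case (CBr z G1 c G2)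
  then obtain L G1' c' G2' where "X' = FCBr (bangs L @ G1') c' G2'" "mset L = z"
     "list_all2 rel_tt G1 G1'" "relctx c c'" "list_all2 rel_tt G2 G2'" by auto
  with CBr.IH[of c'] CBr.prems show ?case
    by (auto intro!: exI[of _ L] exI[of _ "G1' @ [FBr (ffill c' T')] @ G2'"] list_all2_appendI)
qed

lemma stoupfree_rel:
  "stoupfree_tt t \<Longrightarrow> rel_tt t (tr_tt t)" "stoupfree m \<Longrightarrow> rel m (tr m)"
proof (induction t and m)
  case (MF z G)
  then show ?case
    by (auto intro!: exI[of _ "[]"] simp: list_all2_conv_all_nth)
qed auto

lemma move_left:
  "derivF (ffill X (D1 @ Phi @ bangs L @ D2)) C \<Longrightarrow> derivF (ffill X (D1 @ bangs L @ Phi @ D2)) C"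
proof (induction L arbitrary: D1)
  case Nil then show ?case by simp
next
  case (Cons a L)
  have "derivF (ffill X ((D1 @ Phi) @ bangs L @ [FF (Bang a)] @ D2)) C"
    using F_BangP1[of X "D1 @ Phi" a "bangs L" D2 C] Cons.prems by simp
  then have "derivF (ffill X (D1 @ [FF (Bang a)] @ Phi @ bangs L @ D2)) C"
    using F_BangP2[of X D1 "Phi @ bangs L" a D2 C] by simp
  then have "derivF (ffill X ((D1 @ [FF (Bang a)]) @ bangs L @ Phi @ D2)) C"
    using Cons.IH[of "D1 @ [FF (Bang a)]"] by simp
  then show ?case by simp
qed

lemma move_right:
  "derivF (ffill X (D1 @ bangs L @ Phi @ D2)) C \<Longrightarrow> derivF (ffill X (D1 @ Phi @ bangs L @ D2)) C"
proof (induction L arbitrary: D1)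
  case Nil then show ?case by simp
next
  case (Cons a L)
  have "derivF (ffill X ((D1 @ [FF (Bang a)]) @ bangs L @ Phi @ D2)) C"
    using Cons.prems by simp
  then have "derivF (ffill X (D1 @ [FF (Bang a)] @ Phi @ bangs L @ D2)) C"
    using Cons.IH[of "D1 @ [FF (Bang a)]"] by simp
  then have "derivF (ffill X (D1 @ Phi @ [FF (Bang a)] @ bangs L @ D2)) C"
    using F_BangP1[of X D1 a "Phi" "bangs L @ D2" C] by simp
  then show ?case 
    using F_BangP2[of X "D1 @ Phi" "bangs L" a D2 C] by simp
qed

lemma perm_bangs:
  "derivF (ffill X (D1 @ bangs L @ D2)) C \<Longrightarrow> mset L = mset L' \<Longrightarrow> derivF (ffill X (D1 @ bangs L' @ D2)) C"
proof (induction L' arbitrary: D1 L)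
  case Nil then show ?case by simp
next
  case (Cons a L')
  have "a \<in> set L" using Cons.prems(2) by (metis list.set_intros(1) set_mset_mset)
  then obtain P S where L: "L = P @ a # S" by (meson split_list)
  have "derivF (ffill X (D1 @ bangs P @ [FF (Bang a)] @ bangs S @ D2)) C"
    using Cons.prems(1) L by simp
  then have "derivF (ffill X (D1 @ [FF (Bang a)] @ bangs P @ bangs S @ D2)) C"
    using F_BangP2[of X D1 "bangs P" a "bangs S @ D2" C] by simp
  then have "derivF (ffill X ((D1 @ [FF (Bang a)]) @ bangs (P @ S) @ D2)) C" by simp
  moreover have "mset (P @ S) = mset L'" using Cons.prems(2) L by simp
  ultimately have "derivF (ffill X ((D1 @ [FF (Bang a)]) @ bangs L' @ D2)) C"
    using Cons.IH by blast
  then show ?case by simp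
qed

lemma perm_bangs0:
  "derivF (bangs L @ D2) C \<Longrightarrow> mset L = mset L' \<Longrightarrow> derivF (bangs L' @ D2) C"
  using perm_bangs[of FHole "[]" L D2 C L'] by simp

lemma move_left0:
  "derivF (Phi @ bangs L @ D2) C \<Longrightarrow> derivF (bangs L @ Phi @ D2) C"
  using move_left[of FHole "[]" Phi L D2 C] by simp

lemma split3:
  "list_all2 rel_tt (D1 @ [t] @ D2) Gs \<Longrightarrow>
   \<exists>D1' y D2'. Gs = D1' @ [y] @ D2' \<and> list_all2 rel_tt D1 D1' \<and> rel_tt t y \<and> list_all2 rel_tt D2 D2'"
  by (auto simp: list_all2_append1 list_all2_Cons1)

lemma ctx_step:
  assumes "rel (fill X (MF z G)) Y"
  obtains X' L Gs where "Y = ffill X' (bangs L @ Gs)" "mset L = z" "list_all2 rel_tt G Gs"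
    "\<And>z' G' L' Gs'. mset L' = z' \<Longrightarrow> list_all2 rel_tt G' Gs' \<Longrightarrow>
       rel (fill X (MF z' G')) (ffill X' (bangs L' @ Gs'))"
proof -
  from rel_fill_dest[OF assms] obtain X' T' where "Y = ffill X' T'" "relctx X X'" "rel (MF z G) T'"
    by blast
  then obtain L Gs where "T' = bangs L @ Gs" "mset L = z" "list_all2 rel_tt G Gs" by auto
  moreover have r: "rel (MF z' G') (bangs L' @ Gs')"
    if "mset L' = z'" "list_all2 rel_tt G' Gs'" for z' G' L' Gs' using that by auto
  ultimately show ?thesis
  proof -
    assume a: "T' = bangs L @ Gs" "mset L = z" "list_all2 rel_tt G Gs"
    show ?thesis
    proof (rule that[of X' L Gs])
      show "Y = ffill X' (bangs L @ Gs)" using \<open>Y = ffill X' T'\<close> a by simp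
      show "mset L = z" "list_all2 rel_tt G Gs" using a by auto
      show "rel (fill X (MF z' G')) (ffill X' (bangs L' @ Gs'))"
        if "mset L' = z'" "list_all2 rel_tt G' Gs'" for z' G' L' Gs'
        using rel_fill_intro[OF \<open>relctx X X'\<close> r[OF that]] .
    qed
  qed
qed

lemma rel_br_empty: "rel_tt (Br (MF {#} G)) y \<longleftrightarrow> (\<exists>Gs. y = FBr Gs \<and> list_all2 rel_tt G Gs)"
  by auto

lemma main:
  "derivM Xi C \<Longrightarrow> rel Xi Y \<Longrightarrow> derivF Y C"
proof (induction arbitrary: Y rule: derivM.induct)
  case (M_ax A)
  then show ?case by (auto simp: list_all2_Cons1 intro: F_ax)
next
  case M_one
  then show ?case by (auto intro: F_one)
next
  case (M_OverL z1 G B X z2 D1 C D2 D)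
  from rel_fill_dest[OF M_OverL.prems] obtain X' T' where Y: "Y = ffill X' T'"
    and rX: "relctx X X'" and rT: "rel (MF (z1 + z2) (D1 @ [F (Over C B)] @ G @ D2)) T'" by blast
  from rT obtain L Gs where T': "T' = bangs L @ Gs" "mset L = z1 + z2"
    and ra: "list_all2 rel_tt (D1 @ [F (Over C B)] @ G @ D2) Gs" by auto
  from ra obtain D1' G' D2' where Gs: "Gs = D1' @ [FF (Over C B)] @ G' @ D2'"
    and r1: "list_all2 rel_tt D1 D1'" and rG: "list_all2 rel_tt G G'" and r2: "list_all2 rel_tt D2 D2'"
    by (auto simp: list_all2_append1 list_all2_Cons1)
  obtain L1 where L1: "mset L1 = z1" using ex_mset by blast
  obtain L2 where L2: "mset L2 = z2" using ex_mset by blast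
  have d1: "derivF (bangs L1 @ G') B"
    using M_OverL.IH(1) L1 rG by auto
  have "rel (MF z2 (D1 @ [F C] @ D2)) (bangs L2 @ D1' @ [FF C] @ D2')"
    using L2 r1 r2 by (auto intro!: exI[of _ L2] list_all2_appendI)
  then have d2: "derivF (ffill X' ((bangs L2 @ D1') @ [FF C] @ D2')) D"
    using M_OverL.IH(2) rel_fill_intro[OF rX] by auto
  have "derivF (ffill X' ((bangs L2 @ D1') @ [FF (Over C B)] @ (bangs L1 @ G') @ D2')) D"
    by (rule F_OverL[OF d1 d2])
  then have "derivF (ffill X' ([] @ (bangs L2 @ D1' @ [FF (Over C B)]) @ bangs L1 @ G' @ D2')) D"
    by simp
  then have "derivF (ffill X' ([] @ bangs L1 @ (bangs L2 @ D1' @ [FF (Over C B)]) @ G' @ D2')) D"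
    by (rule move_left)
  then have "derivF (ffill X' ([] @ bangs (L1 @ L2) @ (D1' @ [FF (Over C B)] @ G' @ D2'))) D"
    by simp
  then have "derivF (ffill X' ([] @ bangs L @ (D1' @ [FF (Over C B)] @ G' @ D2'))) D"
    by (rule perm_bangs) (simp add: L1 L2 T')
  then show ?case using Y T' Gs by simp
next
  case (M_OverR z G B C)
  then obtain L Gs where "Y = bangs L @ Gs" "mset L = z" "list_all2 rel_tt G Gs" by auto
  then have "rel (MF z (G @ [F B])) (Y @ [FF B])"
    by (auto intro!: exI[of _ L] exI[of _ "Gs @ [FF B]"] list_all2_appendI)
  then have "derivF (Y @ [FF B]) C" using M_OverR.IH by blast
  then show ?case by (rule F_OverR)
next
  case (M_UnderL z1 G A X z2 D1 C D2 D)
  from rel_fill_dest[OF M_UnderL.prems] obtain X' T' where Y: "Y = ffill X' T'"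
    and rX: "relctx X X'" and rT: "rel (MF (z1 + z2) (D1 @ G @ [F (Under A C)] @ D2)) T'" by blast
  from rT obtain L Gs where T': "T' = bangs L @ Gs" "mset L = z1 + z2"
    and ra: "list_all2 rel_tt (D1 @ G @ [F (Under A C)] @ D2) Gs" by auto
  from ra obtain D1' G' D2' where Gs: "Gs = D1' @ G' @ [FF (Under A C)] @ D2'"
    and r1: "list_all2 rel_tt D1 D1'" and rG: "list_all2 rel_tt G G'" and r2: "list_all2 rel_tt D2 D2'"
    by (auto simp: list_all2_append1 list_all2_Cons1)
  obtain L1 where L1: "mset L1 = z1" using ex_mset by blast
  obtain L2 where L2: "mset L2 = z2" using ex_mset by blast
  have d1: "derivF (bangs L1 @ G') A"
    using M_UnderL.IH(1) L1 rG by auto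
  have "rel (MF z2 (D1 @ [F C] @ D2)) (bangs L2 @ D1' @ [FF C] @ D2')"
    using L2 r1 r2 by (auto intro!: exI[of _ L2] list_all2_appendI)
  then have d2: "derivF (ffill X' ((bangs L2 @ D1') @ [FF C] @ D2')) D"
    using M_UnderL.IH(2) rel_fill_intro[OF rX] by auto
  have "derivF (ffill X' ((bangs L2 @ D1') @ (bangs L1 @ G') @ [FF (Under A C)] @ D2')) D"
    by (rule F_UnderL[OF d1 d2])
  then have "derivF (ffill X' ([] @ (bangs L2 @ D1') @ bangs L1 @ G' @ [FF (Under A C)] @ D2')) D"
    by simp
  then have "derivF (ffill X' ([] @ bangs L1 @ (bangs L2 @ D1') @ G' @ [FF (Under A C)] @ D2')) D"
    by (rule move_left)
  then have "derivF (ffill X' ([] @ bangs (L1 @ L2) @ (D1' @ G' @ [FF (Under A C)] @ D2'))) D"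
    by simp
  then have "derivF (ffill X' ([] @ bangs L @ (D1' @ G' @ [FF (Under A C)] @ D2'))) D"
    by (rule perm_bangs) (simp add: L1 L2 T')
  then show ?case using Y T' Gs by simp
next
  case (M_UnderR z A G C)
  then obtain L Gs where Y: "Y = bangs L @ Gs" "mset L = z" "list_all2 rel_tt G Gs" by auto
  then have "rel (MF z ([F A] @ G)) (bangs L @ [FF A] @ Gs)"
    by (auto intro!: exI[of _ L] exI[of _ "[FF A] @ Gs"])
  then have "derivF (bangs L @ [FF A] @ Gs) C" using M_UnderR.IH by blast
  then have "derivF ([FF A] @ bangs L @ Gs) C"
    using move_right[of FHole "[]" L "[FF A]" Gs C] by simp
  then show ?case using Y by (auto intro: F_UnderR)
next
  case (M_ProdR z1 D A z2 G B)
  then obtain L Gs where Y: "Y = bangs L @ Gs" "mset L = z1 + z2" "list_all2 rel_tt (D @ G) Gs" by auto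
  then obtain D' G' where Gs: "Gs = D' @ G'" "list_all2 rel_tt D D'" "list_all2 rel_tt G G'"
    by (auto simp: list_all2_append1)
  obtain L1 where L1: "mset L1 = z1" using ex_mset by blast
  obtain L2 where L2: "mset L2 = z2" using ex_mset by blast
  have "rel (MF z1 D) (bangs L1 @ D')" using L1 Gs by auto
  then have "derivF (bangs L1 @ D') A" using M_ProdR.IH(1) by blast
  moreover have "rel (MF z2 G) (bangs L2 @ G')" using L2 Gs by auto
  then have "derivF (bangs L2 @ G') B" using M_ProdR.IH(2) by blast
  ultimately have "derivF ((bangs L1 @ D') @ (bangs L2 @ G')) (Prod A B)" by (rule F_ProdR)
  then have "derivF ([] @ (bangs L1 @ D') @ bangs L2 @ G') (Prod A B)" by simp
  then have "derivF ([] @ bangs L2 @ (bangs L1 @ D') @ G') (Prod A B)"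
    using move_left[of FHole "[]" "bangs L1 @ D'" L2 G'] by simp
  then have "derivF (bangs (L2 @ L1) @ D' @ G') (Prod A B)" by simp
  then have "derivF (bangs L @ D' @ G') (Prod A B)"
    by (rule perm_bangs0) (simp add: L1 L2 Y)
  then show ?case using Y Gs by simp
next
  case (M_ProdL X z D1 A B D2 D)
  from ctx_step[OF M_ProdL.prems] obtain X' L Gs where Y: "Y = ffill X' (bangs L @ Gs)"
    and L: "mset L = z" and ra: "list_all2 rel_tt (D1 @ [F (Prod A B)] @ D2) Gs"
    and bk: "\<And>z' G' L' Gs'. mset L' = z' \<Longrightarrow> list_all2 rel_tt G' Gs' \<Longrightarrow>
       rel (fill X (MF z' G')) (ffill X' (bangs L' @ Gs'))" by blast
  from split3[OF ra] obtain D1' D2' where Gs: "Gs = D1' @ [FF (Prod A B)] @ D2'"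
    and r1: "list_all2 rel_tt D1 D1'" and r2: "list_all2 rel_tt D2 D2'" by auto
  have "rel (fill X (MF z (D1 @ [F A, F B] @ D2))) (ffill X' (bangs L @ D1' @ [FF A, FF B] @ D2'))"
    by (rule bk[OF L]) (simp add: r1 r2 list_all2_appendI)
  then have "derivF (ffill X' ((bangs L @ D1') @ [FF A, FF B] @ D2')) D" using M_ProdL.IH by simp
  then have "derivF (ffill X' ((bangs L @ D1') @ [FF (Prod A B)] @ D2')) D" by (rule F_ProdL)
  then show ?case using Y Gs by simp
next
  case (M_OneL X z D1 D2 A)
  from ctx_step[OF M_OneL.prems] obtain X' L Gs where Y: "Y = ffill X' (bangs L @ Gs)"
    and L: "mset L = z" and ra: "list_all2 rel_tt (D1 @ [F One] @ D2) Gs"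
    and bk: "\<And>z' G' L' Gs'. mset L' = z' \<Longrightarrow> list_all2 rel_tt G' Gs' \<Longrightarrow>
       rel (fill X (MF z' G')) (ffill X' (bangs L' @ Gs'))" by blast
  from split3[OF ra] obtain D1' D2' where Gs: "Gs = D1' @ [FF One] @ D2'"
    and r1: "list_all2 rel_tt D1 D1'" and r2: "list_all2 rel_tt D2 D2'" by auto
  have "rel (fill X (MF z (D1 @ D2))) (ffill X' (bangs L @ D1' @ D2'))"
    by (rule bk[OF L]) (simp add: r1 r2 list_all2_appendI)
  then have "derivF (ffill X' ((bangs L @ D1') @ D2')) A" using M_OneL.IH by simp
  then have "derivF (ffill X' ((bangs L @ D1') @ [FF One] @ D2')) A" by (rule F_OneL)
  then show ?case using Y Gs by simp
next
  case (M_PlusL X z D1 A1 D2 C A2)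
  from ctx_step[OF M_PlusL.prems] obtain X' L Gs where Y: "Y = ffill X' (bangs L @ Gs)"
    and L: "mset L = z" and ra: "list_all2 rel_tt (D1 @ [F (Plus A1 A2)] @ D2) Gs"
    and bk: "\<And>z' G' L' Gs'. mset L' = z' \<Longrightarrow> list_all2 rel_tt G' Gs' \<Longrightarrow>
       rel (fill X (MF z' G')) (ffill X' (bangs L' @ Gs'))" by blast
  from split3[OF ra] obtain D1' D2' where Gs: "Gs = D1' @ [FF (Plus A1 A2)] @ D2'"
    and r1: "list_all2 rel_tt D1 D1'" and r2: "list_all2 rel_tt D2 D2'" by auto
  have "rel (fill X (MF z (D1 @ [F A1] @ D2))) (ffill X' (bangs L @ D1' @ [FF A1] @ D2'))"
    by (rule bk[OF L]) (simp add: r1 r2 list_all2_appendI)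
  then have d1: "derivF (ffill X' ((bangs L @ D1') @ [FF A1] @ D2')) C" using M_PlusL.IH by simp
  have "rel (fill X (MF z (D1 @ [F A2] @ D2))) (ffill X' (bangs L @ D1' @ [FF A2] @ D2'))"
    by (rule bk[OF L]) (simp add: r1 r2 list_all2_appendI)
  then have d2: "derivF (ffill X' ((bangs L @ D1') @ [FF A2] @ D2')) C" using M_PlusL.IH by simp
  have "derivF (ffill X' ((bangs L @ D1') @ [FF (Plus A1 A2)] @ D2')) C" by (rule F_PlusL[OF d1 d2])
  then show ?case using Y Gs by simp
next
  case (M_PlusR1 Xi A1 A2)
  then show ?case by (auto intro: F_PlusR1)
next
  case (M_PlusR2 Xi A2 A1)
  then show ?case by (auto intro: F_PlusR2)
next
  case (M_WithL1 X z D1 A1 D2 C A2)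
  from ctx_step[OF M_WithL1.prems] obtain X' L Gs where Y: "Y = ffill X' (bangs L @ Gs)"
    and L: "mset L = z" and ra: "list_all2 rel_tt (D1 @ [F (With A1 A2)] @ D2) Gs"
    and bk: "\<And>z' G' L' Gs'. mset L' = z' \<Longrightarrow> list_all2 rel_tt G' Gs' \<Longrightarrow>
       rel (fill X (MF z' G')) (ffill X' (bangs L' @ Gs'))" by blast
  from split3[OF ra] obtain D1' D2' where Gs: "Gs = D1' @ [FF (With A1 A2)] @ D2'"
    and r1: "list_all2 rel_tt D1 D1'" and r2: "list_all2 rel_tt D2 D2'" by auto
  have "rel (fill X (MF z (D1 @ [F A1] @ D2))) (ffill X' (bangs L @ D1' @ [FF A1] @ D2'))"
    by (rule bk[OF L]) (simp add: r1 r2 list_all2_appendI)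
  then have "derivF (ffill X' ((bangs L @ D1') @ [FF A1] @ D2')) C" using M_WithL1.IH by simp
  then have "derivF (ffill X' ((bangs L @ D1') @ [FF (With A1 A2)] @ D2')) C" by (rule F_WithL1)
  then show ?case using Y Gs by simp
next
  case (M_WithL2 X z D1 A2 D2 C A1)
  from ctx_step[OF M_WithL2.prems] obtain X' L Gs where Y: "Y = ffill X' (bangs L @ Gs)"
    and L: "mset L = z" and ra: "list_all2 rel_tt (D1 @ [F (With A1 A2)] @ D2) Gs"
    and bk: "\<And>z' G' L' Gs'. mset L' = z' \<Longrightarrow> list_all2 rel_tt G' Gs' \<Longrightarrow>
       rel (fill X (MF z' G')) (ffill X' (bangs L' @ Gs'))" by blast
  from split3[OF ra] obtain D1' D2' where Gs: "Gs = D1' @ [FF (With A1 A2)] @ D2'"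
    and r1: "list_all2 rel_tt D1 D1'" and r2: "list_all2 rel_tt D2 D2'" by auto
  have "rel (fill X (MF z (D1 @ [F A2] @ D2))) (ffill X' (bangs L @ D1' @ [FF A2] @ D2'))"
    by (rule bk[OF L]) (simp add: r1 r2 list_all2_appendI)
  then have "derivF (ffill X' ((bangs L @ D1') @ [FF A2] @ D2')) C" using M_WithL2.IH by simp
  then have "derivF (ffill X' ((bangs L @ D1') @ [FF (With A1 A2)] @ D2')) C" by (rule F_WithL2)
  then show ?case using Y Gs by simp
next
  case (M_WithR Xi A1 A2)
  then show ?case by (auto intro: F_WithR)
next
  case (M_BoxInvL X z D1 A D2 B)
  from ctx_step[OF M_BoxInvL.prems] obtain X' L Gs where Y: "Y = ffill X' (bangs L @ Gs)"
    and L: "mset L = z" and ra: "list_all2 rel_tt (D1 @ [Br (MF {#} [F (BoxInv A)])] @ D2) Gs"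
    and bk: "\<And>z' G' L' Gs'. mset L' = z' \<Longrightarrow> list_all2 rel_tt G' Gs' \<Longrightarrow>
       rel (fill X (MF z' G')) (ffill X' (bangs L' @ Gs'))" by blast
  from split3[OF ra] obtain D1' y D2' where Gs: "Gs = D1' @ [y] @ D2'"
    and ry: "rel_tt (Br (MF {#} [F (BoxInv A)])) y"
    and r1: "list_all2 rel_tt D1 D1'" and r2: "list_all2 rel_tt D2 D2'" by auto
  from ry have y: "y = FBr [FF (BoxInv A)]" by (auto simp: list_all2_Cons1)
  have "rel (fill X (MF z (D1 @ [F A] @ D2))) (ffill X' (bangs L @ D1' @ [FF A] @ D2'))"
    by (rule bk[OF L]) (simp add: r1 r2 list_all2_appendI)
  then have "derivF (ffill X' ((bangs L @ D1') @ [FF A] @ D2')) B" using M_BoxInvL.IH by simp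
  then have "derivF (ffill X' ((bangs L @ D1') @ [FBr [FF (BoxInv A)]] @ D2')) B" by (rule F_BoxInvL)
  then show ?case using Y Gs y by simp
next
  case (M_BoxInvR Xi A)
  have "rel (MF {#} [Br Xi]) [FBr Y]" using M_BoxInvR.prems by auto
  then have "derivF [FBr Y] A" using M_BoxInvR.IH by blast
  then show ?case by (rule F_BoxInvR)
next
  case (M_DiamL X z D1 A D2 B)
  from ctx_step[OF M_DiamL.prems] obtain X' L Gs where Y: "Y = ffill X' (bangs L @ Gs)"
    and L: "mset L = z" and ra: "list_all2 rel_tt (D1 @ [F (Diam A)] @ D2) Gs"
    and bk: "\<And>z' G' L' Gs'. mset L' = z' \<Longrightarrow> list_all2 rel_tt G' Gs' \<Longrightarrow>
       rel (fill X (MF z' G')) (ffill X' (bangs L' @ Gs'))" by blast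
  from split3[OF ra] obtain D1' D2' where Gs: "Gs = D1' @ [FF (Diam A)] @ D2'"
    and r1: "list_all2 rel_tt D1 D1'" and r2: "list_all2 rel_tt D2 D2'" by auto
  have rb: "rel_tt (Br (MF {#} [F A])) (FBr [FF A])" by (auto intro!: exI[of _ "[]"])
  have "rel (fill X (MF z (D1 @ [Br (MF {#} [F A])] @ D2))) (ffill X' (bangs L @ D1' @ [FBr [FF A]] @ D2'))"
    by (rule bk[OF L]) (simp add: r1 r2 rb list_all2_appendI)
  then have "derivF (ffill X' ((bangs L @ D1') @ [FBr [FF A]] @ D2')) B" using M_DiamL.IH by simp
  then have "derivF (ffill X' ((bangs L @ D1') @ [FF (Diam A)] @ D2')) B" by (rule F_DiamL)
  then show ?case using Y Gs by simp
next
  case (M_DiamR Xi A)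
  then obtain Y0 where "Y = [FBr Y0]" "rel Xi Y0" by (auto simp: list_all2_Cons1)
  then show ?case using M_DiamR.IH by (auto intro: F_DiamR)
next
  case (M_BangL X z A G1 G2 B)
  from ctx_step[OF M_BangL.prems] obtain X' L Gs where Y: "Y = ffill X' (bangs L @ Gs)"
    and L: "mset L = z" and ra: "list_all2 rel_tt (G1 @ [F (Bang A)] @ G2) Gs"
    and bk: "\<And>z' G' L' Gs'. mset L' = z' \<Longrightarrow> list_all2 rel_tt G' Gs' \<Longrightarrow>
       rel (fill X (MF z' G')) (ffill X' (bangs L' @ Gs'))" by blast
  from split3[OF ra] obtain G1' G2' where Gs: "Gs = G1' @ [FF (Bang A)] @ G2'"
    and r1: "list_all2 rel_tt G1 G1'" and r2: "list_all2 rel_tt G2 G2'" by auto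
  have "rel (fill X (MF (z + {#A#}) (G1 @ G2))) (ffill X' (bangs (A # L) @ G1' @ G2'))"
    by (rule bk) (simp_all add: L r1 r2 list_all2_appendI)
  then have "derivF (ffill X' ([] @ [FF (Bang A)] @ (bangs L @ G1') @ G2')) B" using M_BangL.IH by simp
  then have "derivF (ffill X' ([] @ (bangs L @ G1') @ [FF (Bang A)] @ G2')) B" by (rule F_BangP1)
  then show ?case using Y Gs by simp
next
  case (M_BangP X z G1 A G2 B)
  from ctx_step[OF M_BangP.prems] obtain X' L Gs where Y: "Y = ffill X' (bangs L @ Gs)"
    and L: "mset L = z + {#A#}" and ra: "list_all2 rel_tt (G1 @ G2) Gs"
    and bk: "\<And>z' G' L' Gs'. mset L' = z' \<Longrightarrow> list_all2 rel_tt G' Gs' \<Longrightarrow>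
       rel (fill X (MF z' G')) (ffill X' (bangs L' @ Gs'))" by blast
  from ra obtain G1' G2' where Gs: "Gs = G1' @ G2'"
    and r1: "list_all2 rel_tt G1 G1'" and r2: "list_all2 rel_tt G2 G2'" by (auto simp: list_all2_append1)
  define L0 where "L0 = remove1 A L"
  have L0: "mset L0 = z" using L by (simp add: L0_def)
  have "rel (fill X (MF z (G1 @ [F A] @ G2))) (ffill X' (bangs L0 @ G1' @ [FF A] @ G2'))"
    by (rule bk[OF L0]) (simp add: r1 r2 list_all2_appendI)
  then have "derivF (ffill X' ((bangs L0 @ G1') @ [FF A] @ G2')) B" using M_BangP.IH by simp
  then have "derivF (ffill X' ((bangs L0 @ G1') @ [FF (Bang A)] @ G2')) B" by (rule F_BangL)
  then have "derivF (ffill X' ([] @ (bangs L0 @ G1') @ [FF (Bang A)] @ G2')) B" by simp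
  then have "derivF (ffill X' ([] @ [FF (Bang A)] @ (bangs L0 @ G1') @ G2')) B" by (rule F_BangP2)
  then have "derivF (ffill X' ([] @ bangs (A # L0) @ G1' @ G2')) B" by simp
  then have "derivF (ffill X' ([] @ bangs L @ G1' @ G2')) B"
    by (rule perm_bangs) (simp add: L L0)
  then show ?case using Y Gs by simp
next
  case (M_BangR A B)
  then show ?case by (auto simp: list_all2_Cons1 intro: F_BangR)
next
  case (M_BangC X z A G1 G2 G3 B)
  from ctx_step[OF M_BangC.prems] obtain X' L Gs where Y: "Y = ffill X' (bangs L @ Gs)"
    and L: "mset L = z + {#A#}" and ra: "list_all2 rel_tt (G1 @ [Br (MF {#} [Br (MF {#} G2)])] @ G3) Gs"
    and bk: "\<And>z' G' L' Gs'. mset L' = z' \<Longrightarrow> list_all2 rel_tt G' Gs' \<Longrightarrow>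
       rel (fill X (MF z' G')) (ffill X' (bangs L' @ Gs'))" by blast
  from split3[OF ra] obtain G1' y G3' where Gs: "Gs = G1' @ [y] @ G3'"
    and ry: "rel_tt (Br (MF {#} [Br (MF {#} G2)])) y"
    and r1: "list_all2 rel_tt G1 G1'" and r3: "list_all2 rel_tt G3 G3'" by auto
  from ry obtain G2' where y: "y = FBr [FBr G2']" and r2: "list_all2 rel_tt G2 G2'"
    by (auto simp: list_all2_Cons1)
  define L0 where "L0 = remove1 A L"
  have L0: "mset L0 = z" using L by (simp add: L0_def)
  have "rel (MF {#A#} G2) (bangs [A] @ G2')" unfolding rel.simps using r2 by force
  then have rb: "rel_tt (Br (MF {#A#} G2)) (FBr ([FF (Bang A)] @ G2'))" by simp
  have "rel (fill X (MF (z + {#A#}) (G1 @ [Br (MF {#A#} G2)] @ G3)))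
      (ffill X' (bangs (A # L0) @ G1' @ [FBr ([FF (Bang A)] @ G2')] @ G3'))"
    using rb by (intro bk) (auto simp: L0 r1 r3 simp del: rel_tt.simps intro!: list_all2_appendI)
  then have "derivF (ffill X' ([FF (Bang A)] @ (bangs L0 @ G1') @ [FBr ([FF (Bang A)] @ G2')] @ G3')) B"
    using M_BangC.IH by simp
  then have "derivF (ffill X' ([FF (Bang A)] @ (bangs L0 @ G1') @ [FBr [FBr G2']] @ G3')) B"
    by (rule F_BangC)
  then have "derivF (ffill X' ([] @ bangs (A # L0) @ G1' @ [FBr [FBr G2']] @ G3')) B" by simp
  then have "derivF (ffill X' ([] @ bangs L @ G1' @ [FBr [FBr G2']] @ G3')) B"
    by (rule perm_bangs) (simp add: L L0)
  then show ?case using Y Gs y by simp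
qed

theorem proposition3:
  assumes "stoupfree Xi" and "derivM Xi C"
  shows "derivF (tr Xi) C"
  using main[OF assms(2) stoupfree_rel(2)[OF assms(1)]] .

end
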